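(* For every $l\ge0$, $a=1,\dots,p_1$, $b=1,\dots,p_2$: $$zA^{(l)}_a(z)=\sum_{k=-N_2}^{N_1}J_k(l)A^{(l+k)}_a(z),\qquad zC^{(l)}_b(z)-c_b^{(l)}=\sum_{k=-N_2}^{N_1}J_k(l)C^{(l+k)}_b(z),$$ $$z\bar A^{(l)}_b(z)=\sum_{k=-N_2}^{N_1}J_k(l-k)\bar A^{(l-k)}_b(z),\qquad z\bar C^{(l)}_a(z)-\bar c_a^{(l)}=\sum_{k=-N_2}^{N_1}J_k(l-k)\bar C^{(l-k)}_a(z),$$ where terms with a negative superscript or negative argument are zero.
   Context: Setting: $\mu$ finite Borel measure on an interval, weights $w_{1,a}$ ($a\le p_1$), $w_{2,b}$ ($b\le p_2$), compositions $\vec n_\ell=(n_{\ell,1},\dots,n_{\ell,p_\ell})\in\mathbb N^{p_\ell}$; each $i\in\mathbb Z_+$ is uniquely $i=q|\vec n_\ell|+n_{\ell,1}+\dots+n_{\ell,a-1}+r$ ($0\le r<n_{\ell,a}$), $a_\ell(i)=a$, $k_\ell(i)=qn_{\ell,a}+r$; moment matrix $g_{i,j}=\int x^{k_1(i)+k_2(j)}w_{1,a_1(i)}w_{2,a_2(j)}d\mu$, assumed to factor as $g=S^{-1}\bar S$ ($S$ unit lower triangular, $\bar S$ upper triangular invertible). $e_{\ell,a}(k)=e_i$ with $a_\ell(i)=a,k_\ell(i)=k$; $\Lambda_{\ell,a}=\sum_ke_{\ell,a}(k)e_{\ell,a}(k+1)^\top$, $\Upsilon_\ell=\sum_a\Lambda_{\ell,a}$;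 $J=S\Upsilon_1S^{-1}=\bar S\Upsilon_2^\top\bar S^{-1}$ and $J_k(l):=J_{l,l+k}$. $N_1=\max_a(|\vec n_1|-n_{1,a}+1)$, $N_2=\max_b(|\vec n_2|-n_{2,b}+1)$. $\chi_{\ell,a}(z)=\sum_ke_{\ell,a}(k)z^k$, $\chi^*_{\ell,a}(z)=z^{-1}\chi_{\ell,a}(z^{-1})$. $A^{(l)}_a$ is the $l$-th entry of $S\chi_{1,a}$, $\bar A^{(l)}_b$ the $l$-th entry of $(\bar S^{-1})^\top\chi_{2,b}$, $C^{(l)}_b$ the $l$-th entry of the formal series vector $\bar S\chi^*_{2,b}(z)$, $\bar C^{(l)}_a$ the $l$-th entry of $(S^{-1})^\top\chi^*_{1,a}(z)$; $c_b=\bar Se_{2,b}(0)$, $\bar c_a=(S^{-1})^\top e_{1,a}(0)$, with $l$-th entries $c^{(l)}_b$, $\bar c^{(l)}_a$. *)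

theory Defs
  imports "HOL-Analysis.Analysis" "HOL-Computational_Algebra.Formal_Laurent_Series"
begin

text \<open>A composition is a function n :: nat => nat together with its length p;
  only the values n 1, ..., n p matter.  |n| = n 1 + ... + n p.\<close>

definition comp_ok :: "(nat \<Rightarrow> nat) \<Rightarrow> nat \<Rightarrow> bool" where
  "comp_ok n p \<longleftrightarrow> p \<ge> 1 \<and> (\<forall>a\<in>{1..p}. n a > 0)"

definition comp_size :: "(nat \<Rightarrow> nat) \<Rightarrow> nat \<Rightarrow> nat" where
  "comp_size n p = (\<Sum>a=1..p. n a)"

definition decomp :: "(nat \<Rightarrow> nat) \<Rightarrow> nat \<Rightarrow> nat \<Rightarrow> nat \<times> nat \<times> nat" where
  "decomp n p i = (THE (q, a, r). 1 \<le> a \<and> a \<le> p \<and> r < n a \<and>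
       i = q * comp_size n p + (\<Sum>a'\<in>{1..<a}. n a') + r)"

definition aidx :: "(nat \<Rightarrow> nat) \<Rightarrow> nat \<Rightarrow> nat \<Rightarrow> nat" where
  "aidx n p i = (case decomp n p i of (q, a, r) \<Rightarrow> a)"

definition kidx :: "(nat \<Rightarrow> nat) \<Rightarrow> nat \<Rightarrow> nat \<Rightarrow> nat" where
  "kidx n p i = (case decomp n p i of (q, a, r) \<Rightarrow> q * n a + r)"

text \<open>e_{l,a}(k) = e_i with a(i) = a, k(i) = k; we record the index i.\<close>
definition eidx :: "(nat \<Rightarrow> nat) \<Rightarrow> nat \<Rightarrow> nat \<Rightarrow> nat \<Rightarrow> nat" where
  "eidx n p a k = (THE i. aidx n p i = a \<and> kidx n p i = k)"

definition Nbd :: "(nat \<Rightarrow> nat) \<Rightarrow> nat \<Rightarrow> nat" where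
  "Nbd n p = Max ((\<lambda>a. comp_size n p - n a + 1) ` {1..p})"

type_synonym imat = "nat \<Rightarrow> nat \<Rightarrow> real"

text \<open>Product of semi-infinite matrices, (A B)_{ij} = sum_k A_{ik} B_{kj}
  (all products used below involve only finitely many nonzero terms).\<close>
definition mat_mult :: "imat \<Rightarrow> imat \<Rightarrow> imat" where
  "mat_mult A B = (\<lambda>i j. infsum (\<lambda>k. A i k * B k j) UNIV)"

definition mat_id :: imat where
  "mat_id = (\<lambda>i j. if i = j then 1 else 0)"

definition lower_tri :: "imat \<Rightarrow> bool" where
  "lower_tri M \<longleftrightarrow> (\<forall>i j. i < j \<longrightarrow> M i j = 0)"

definition upper_tri :: "imat \<Rightarrow> bool" where
  "upper_tri M \<longleftrightarrow> (\<forall>i j. j < i \<longrightarrow> M i j = 0)"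

definition lt_inv :: "imat \<Rightarrow> imat" where
  "lt_inv M = (THE N. lower_tri N \<and> mat_mult M N = mat_id \<and> mat_mult N M = mat_id)"

definition ut_inv :: "imat \<Rightarrow> imat" where
  "ut_inv M = (THE N. upper_tri N \<and> mat_mult M N = mat_id \<and> mat_mult N M = mat_id)"

definition Lambda :: "(nat \<Rightarrow> nat) \<Rightarrow> nat \<Rightarrow> nat \<Rightarrow> imat" where
  "Lambda n p a = (\<lambda>i j. if \<exists>k. i = eidx n p a k \<and> j = eidx n p a (Suc k) then 1 else 0)"

definition Upsilon :: "(nat \<Rightarrow> nat) \<Rightarrow> nat \<Rightarrow> imat" where
  "Upsilon n p = (\<lambda>i j. \<Sum>a=1..p. Lambda n p a i j)"

definition moment_mat ::
  "real measure \<Rightarrow> (nat \<Rightarrow> real \<Rightarrow> real) \<Rightarrow> (nat \<Rightarrow> real \<Rightarrow> real)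
   \<Rightarrow> (nat \<Rightarrow> nat) \<Rightarrow> nat \<Rightarrow> (nat \<Rightarrow> nat) \<Rightarrow> nat \<Rightarrow> imat" where
  "moment_mat \<mu> w1 w2 n1 p1 n2 p2 = (\<lambda>i j.
     integral\<^sup>L \<mu> (\<lambda>x. x ^ (kidx n1 p1 i + kidx n2 p2 j)
                      * w1 (aidx n1 p1 i) x * w2 (aidx n2 p2 j) x))"

text \<open>Polynomials in z and formal series in z^{-1} are both represented as
  real formal Laurent series in the variable X = z^{-1}; thus z = X^{-1}.\<close>
definition zvar :: "real fls" where "zvar = fls_X_inv"
definition zinv :: "real fls" where "zinv = fls_X"

definition zinv_series :: "(nat \<Rightarrow> real) \<Rightarrow> real fls" where
  "zinv_series f = fps_to_fls (Abs_fps f)"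

definition Jmat :: "imat \<Rightarrow> (nat \<Rightarrow> nat) \<Rightarrow> nat \<Rightarrow> imat" where
  "Jmat S n1 p1 = mat_mult (mat_mult S (Upsilon n1 p1)) (lt_inv S)"

definition Jk :: "imat \<Rightarrow> int \<Rightarrow> int \<Rightarrow> real" where
  "Jk J k l = (if l < 0 \<or> l + k < 0 then 0 else J (nat l) (nat (l + k)))"

text \<open>A^{(l)}_a = l-th entry of S chi_{1,a} (S lower triangular, so only indices <= l occur).\<close>
definition Apol :: "imat \<Rightarrow> (nat \<Rightarrow> nat) \<Rightarrow> nat \<Rightarrow> nat \<Rightarrow> int \<Rightarrow> real fls" where
  "Apol S n1 p1 a l = (if l < 0 then 0 else
     (\<Sum>k\<in>{k. eidx n1 p1 a k \<le> nat l}. fls_const (S (nat l) (eidx n1 p1 a k)) * zvar ^ k))"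

text \<open>Abar^{(l)}_b = l-th entry of (Sbar^{-1})^T chi_{2,b} (Sbar^{-1} upper triangular).\<close>
definition Abarpol :: "imat \<Rightarrow> (nat \<Rightarrow> nat) \<Rightarrow> nat \<Rightarrow> nat \<Rightarrow> int \<Rightarrow> real fls" where
  "Abarpol Sb n2 p2 b l = (if l < 0 then 0 else
     (\<Sum>k\<in>{k. eidx n2 p2 b k \<le> nat l}. fls_const (ut_inv Sb (eidx n2 p2 b k) (nat l)) * zvar ^ k))"

text \<open>C^{(l)}_b = l-th entry of Sbar chi*_{2,b}(z) = sum_k Sbar_{l, e_{2,b}(k)} z^{-k-1}.\<close>
definition Cser :: "imat \<Rightarrow> (nat \<Rightarrow> nat) \<Rightarrow> nat \<Rightarrow> nat \<Rightarrow> int \<Rightarrow> real fls" where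
  "Cser Sb n2 p2 b l = (if l < 0 then 0 else
     zinv * zinv_series (\<lambda>k. Sb (nat l) (eidx n2 p2 b k)))"

text \<open>Cbar^{(l)}_a = l-th entry of (S^{-1})^T chi*_{1,a}(z) = sum_k (S^{-1})_{e_{1,a}(k), l} z^{-k-1}.\<close>
definition Cbarser :: "imat \<Rightarrow> (nat \<Rightarrow> nat) \<Rightarrow> nat \<Rightarrow> nat \<Rightarrow> int \<Rightarrow> real fls" where
  "Cbarser S n1 p1 a l = (if l < 0 then 0 else
     zinv * zinv_series (\<lambda>k. lt_inv S (eidx n1 p1 a k) (nat l)))"

definition cvec :: "imat \<Rightarrow> (nat \<Rightarrow> nat) \<Rightarrow> nat \<Rightarrow> nat \<Rightarrow> nat \<Rightarrow> real" where
  "cvec Sb n2 p2 b l = Sb l (eidx n2 p2 b 0)"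

definition cbarvec :: "imat \<Rightarrow> (nat \<Rightarrow> nat) \<Rightarrow> nat \<Rightarrow> nat \<Rightarrow> nat \<Rightarrow> real" where
  "cbarvec S n1 p1 a l = lt_inv S (eidx n1 p1 a 0) l"

end

theory Submission
  imports Defs
begin


definition off :: "(nat \<Rightarrow> nat) \<Rightarrow> nat \<Rightarrow> nat" where
  "off n a = (\<Sum>a'\<in>{1..<a}. n a')"

lemma off_Suc: "1 \<le> a \<Longrightarrow> off n (Suc a) = off n a + n a"
  unfolding off_def by (simp add: add.commute)

lemma off_mono: "a \<le> a' \<Longrightarrow> off n a \<le> off n a'"
  unfolding off_def by (rule sum_mono2) auto

lemma off_p: "off n (Suc p) = comp_size n p"
  unfolding off_def comp_size_def by (rule sum.cong) auto

context
  fixes n :: "nat \<Rightarrow> nat" and p :: nat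
  assumes cok: "comp_ok n p"
begin

lemma p_pos: "1 \<le> p" and n_pos: "a \<in> {1..p} \<Longrightarrow> 0 < n a"
  using cok unfolding comp_ok_def by auto

lemma off_bound: "a \<in> {1..p} \<Longrightarrow> off n a + n a \<le> comp_size n p"
proof -
  assume a: "a \<in> {1..p}"
  have "off n a + n a = off n (Suc a)" using a off_Suc by auto
  also have "\<dots> \<le> off n (Suc p)" using a by (intro off_mono) auto
  finally show ?thesis by (simp add: off_p)
qed

lemma S_pos: "0 < comp_size n p"
  using off_bound[of 1] n_pos[of 1] p_pos by auto

lemma enc_inj:
  assumes a: "a \<in> {1..p}" "r < n a" and a': "a' \<in> {1..p}" "r' < n a'"
    and eq: "q * comp_size n p + off n a + r = q' * comp_size n p + off n a' + r'"
  shows "q = q' \<and> a = a' \<and> r = r'"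
proof -
  let ?S = "comp_size n p"
  have l1: "off n a + r < ?S" using off_bound[OF a(1)] a(2) by linarith
  have l2: "off n a' + r' < ?S" using off_bound[OF a'(1)] a'(2) by linarith
  have "(q * ?S + (off n a + r)) div ?S = q" using l1 by simp
  moreover have "(q' * ?S + (off n a' + r')) div ?S = q'" using l2 by simp
  ultimately have qq: "q = q'" using eq by (simp add: add.assoc)
  hence e2: "off n a + r = off n a' + r'" using eq by simp
  have "a = a'"
  proof (rule ccontr)
    assume "a \<noteq> a'"
    hence "a < a' \<or> a' < a" by auto
    thus False
    proof
      assume "a < a'"
      hence "off n (Suc a) \<le> off n a'" by (intro off_mono) auto
      thus False using off_Suc[of a n] a e2 by auto
    next
      assume "a' < a"
      hence "off n (Suc a') \<le> off n a" by (intro off_mono) auto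
      thus False using off_Suc[of a' n] a' e2 by auto
    qed
  qed
  thus ?thesis using qq e2 by simp
qed

lemma enc_ex: "\<exists>q a r. a \<in> {1..p} \<and> r < n a \<and> i = q * comp_size n p + off n a + r"
proof -
  let ?S = "comp_size n p"
  define s where "s = i mod ?S"
  have s: "s < ?S" using S_pos s_def by simp
  define A where "A = {a \<in> {1..p}. off n a \<le> s}"
  have fA: "finite A" and neA: "1 \<in> A" using p_pos by (auto simp: A_def off_def)
  define a where "a = Max A"
  have aA: "a \<in> A" unfolding a_def using fA neA by (intro Max_in) auto
  have "s < off n (Suc a)"
  proof (cases "a < p")
    case True
    have "Suc a \<notin> A"
    proof
      assume "Suc a \<in> A"
      hence "Suc a \<le> a" unfolding a_def by (rule Max_ge[OF fA])
      thus False by simp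
    qed
    moreover have "Suc a \<in> {1..p}" using True by simp
    ultimately show ?thesis unfolding A_def by simp
  next
    case False
    hence "a = p" using aA by (auto simp: A_def)
    thus ?thesis using s off_p by simp
  qed
  moreover have a1: "a \<in> {1..p}" and oa: "off n a \<le> s" using aA by (auto simp: A_def)
  ultimately have "s - off n a < n a" using off_Suc[of a n] by simp
  moreover have "i = (i div ?S) * ?S + off n a + (s - off n a)"
    using oa div_mult_mod_eq[of i ?S] unfolding s_def by linarith
  ultimately show ?thesis using a1 by blast
qed

lemma decomp_eq:
  assumes "a \<in> {1..p}" "r < n a" "i = q * comp_size n p + off n a + r"
  shows "decomp n p i = (q, a, r)"
  unfolding decomp_def
proof (rule the_equality)
  show "case (q, a, r) of (q, a, r) \<Rightarrow> 1 \<le> a \<and> a \<le> p \<and> r < n a \<and>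
       i = q * comp_size n p + (\<Sum>a'\<in>{1..<a}. n a') + r"
    using assms by (simp add: off_def)
next
  fix x assume "case x of (q, a, r) \<Rightarrow> 1 \<le> a \<and> a \<le> p \<and> r < n a \<and>
       i = q * comp_size n p + (\<Sum>a'\<in>{1..<a}. n a') + r"
  then obtain q' a' r' where x: "x = (q', a', r')" "a' \<in> {1..p}" "r' < n a'"
      "i = q' * comp_size n p + off n a' + r'"
    by (cases x) (auto simp: off_def)
  have "q' = q \<and> a' = a \<and> r' = r"
    by (rule enc_inj[OF x(2,3) assms(1,2)]) (use x(4) assms(3) in simp)
  thus "x = (q, a, r)" using x(1) by simp
qed

lemma decomp_props:
  obtains q a r where "decomp n p i = (q, a, r)" "a \<in> {1..p}" "r < n a"
    "i = q * comp_size n p + off n a + r"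
  using enc_ex[of i] decomp_eq by blast

lemma aidx_rng: "aidx n p i \<in> {1..p}"
  by (rule decomp_props[of i]) (auto simp: aidx_def)

definition ef :: "nat \<Rightarrow> nat \<Rightarrow> nat" where
  "ef a k = (k div n a) * comp_size n p + off n a + k mod n a"

lemma ef_idx: assumes "a \<in> {1..p}"
  shows "aidx n p (ef a k) = a" "kidx n p (ef a k) = k"
proof -
  have d: "decomp n p (ef a k) = (k div n a, a, k mod n a)"
    using assms n_pos[OF assms] by (intro decomp_eq) (auto simp: ef_def)
  show "aidx n p (ef a k) = a" by (simp add: aidx_def d)
  show "kidx n p (ef a k) = k" by (simp add: kidx_def d)
qed

lemma ef_unique: assumes "aidx n p i = a" "kidx n p i = k" shows "i = ef a k"
proof (rule decomp_props[of i])
  fix q a' r assume d: "decomp n p i = (q, a', r)" "a' \<in> {1..p}" "r < n a'"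
    "i = q * comp_size n p + off n a' + r"
  have "a' = a" using assms d by (simp add: aidx_def)
  moreover have "k = q * n a' + r" using assms d by (simp add: kidx_def)
  ultimately have "k div n a = q" "k mod n a = r" using d(3) by auto
  thus "i = ef a k" using d `a' = a` by (simp add: ef_def)
qed

lemma eidx_eq: assumes "a \<in> {1..p}" shows "eidx n p a k = ef a k"
  unfolding eidx_def using ef_idx[OF assms] ef_unique by blast

lemma eidx_idx: assumes "a \<in> {1..p}"
  shows "aidx n p (eidx n p a k) = a" "kidx n p (eidx n p a k) = k"
  using ef_idx[OF assms] eidx_eq[OF assms] by auto

lemma eidx_inv: "eidx n p (aidx n p i) (kidx n p i) = i"
  using eidx_eq[OF aidx_rng] ef_unique by auto

lemma eidx_inj: assumes "a \<in> {1..p}" "a' \<in> {1..p}" "eidx n p a k = eidx n p a' k'"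
  shows "a = a' \<and> k = k'"
proof -
  have "aidx n p (eidx n p a k) = aidx n p (eidx n p a' k')"
       "kidx n p (eidx n p a k) = kidx n p (eidx n p a' k')" using assms(3) by simp_all
  thus ?thesis unfolding eidx_idx[OF assms(1)] eidx_idx[OF assms(2)] by simp
qed

lemma Nbd_ge: "a \<in> {1..p} \<Longrightarrow> comp_size n p - n a + 1 \<le> Nbd n p"
  unfolding Nbd_def by (rule Max_ge) auto

lemma eidx_step: assumes a: "a \<in> {1..p}"
  shows "eidx n p a k < eidx n p a (Suc k) \<and> eidx n p a (Suc k) \<le> eidx n p a k + Nbd n p"
proof -
  let ?S = "comp_size n p" and ?m = "n a"
  have m: "0 < ?m" using n_pos[OF a] .
  have mS: "off n a + ?m \<le> ?S" using off_bound[OF a] .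
  define q r where "q = k div ?m" and "r = k mod ?m"
  have k: "k = q * ?m + r" and r: "r < ?m" using m by (auto simp: q_def r_def)
  show ?thesis
  proof (cases "Suc r < ?m")
    case True
    have sk: "Suc k = Suc r + q * ?m" using k by simp
    have d1: "Suc k div ?m = q"
    proof -
      have "Suc k div ?m = q + Suc r div ?m" unfolding sk by (rule div_mult_self1) (use m in simp)
      thus ?thesis using True by simp
    qed
    have d2: "Suc k mod ?m = Suc r" unfolding sk mod_mult_self1 using True by simp
    have "eidx n p a (Suc k) = Suc (eidx n p a k)"
      unfolding eidx_eq[OF a] ef_def d1 d2 q_def[symmetric] r_def[symmetric] by simp
    thus ?thesis using Nbd_ge[OF a] by simp
  next
    case False
    hence sr: "Suc r = ?m" using r by auto
    have "Suc k = (Suc q) * ?m" using k sr by simp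
    hence "Suc k div ?m = Suc q" "Suc k mod ?m = 0" using m by simp_all
    hence "eidx n p a (Suc k) = eidx n p a k + (?S - ?m + 1)"
      unfolding eidx_eq[OF a] ef_def q_def[symmetric] r_def[symmetric] using sr mS by simp
    thus ?thesis using Nbd_ge[OF a] mS m by arith
  qed
qed

lemma eidx_ge: assumes "a \<in> {1..p}" shows "k \<le> eidx n p a k"
proof (induction k)
  case (Suc k) thus ?case using eidx_step[OF assms, of k] by simp
qed simp

lemma eidx_mono: assumes "a \<in> {1..p}" "k \<le> k'" shows "eidx n p a k \<le> eidx n p a k'"
  using assms(2)
proof (induction k' rule: dec_induct)
  case (step k') thus ?case using eidx_step[OF assms(1), of k'] by simp
qed simp

definition nxt :: "nat \<Rightarrow> nat" where
  "nxt i = eidx n p (aidx n p i) (Suc (kidx n p i))"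

lemma nxt_bound: "i < nxt i \<and> nxt i \<le> i + Nbd n p"
  using eidx_step[OF aidx_rng, of i "kidx n p i"] eidx_inv[of i] by (simp add: nxt_def)

lemma nxt_eidx: "a \<in> {1..p} \<Longrightarrow> nxt (eidx n p a k) = eidx n p a (Suc k)"
  by (simp add: nxt_def eidx_idx)

lemma nxt_eq_eidx: assumes a: "a \<in> {1..p}"
  shows "nxt m = eidx n p a j \<longleftrightarrow> (0 < j \<and> m = eidx n p a (j - 1))"
proof
  assume h: "nxt m = eidx n p a j"
  have "aidx n p m = a \<and> Suc (kidx n p m) = j"
    using eidx_inj[OF aidx_rng a] h by (simp add: nxt_def)
  thus "0 < j \<and> m = eidx n p a (j - 1)" using eidx_inv[of m] by auto
next
  assume "0 < j \<and> m = eidx n p a (j - 1)"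
  thus "nxt m = eidx n p a j" using nxt_eidx[OF a] by (cases j) auto
qed

lemma Upsilon_eq: "Upsilon n p i j = (if j = nxt i then 1 else 0)"
proof -
  have L: "Lambda n p a i j = (if a = aidx n p i \<and> j = nxt i then 1 else 0)" if a: "a \<in> {1..p}" for a
  proof -
    have "(\<exists>k. i = eidx n p a k \<and> j = eidx n p a (Suc k)) \<longleftrightarrow> (a = aidx n p i \<and> j = nxt i)"
    proof
      assume "\<exists>k. i = eidx n p a k \<and> j = eidx n p a (Suc k)"
      then obtain k where "i = eidx n p a k" "j = eidx n p a (Suc k)" by blast
      thus "a = aidx n p i \<and> j = nxt i" using eidx_idx[OF a] nxt_eidx[OF a] by auto
    next
      assume "a = aidx n p i \<and> j = nxt i"
      thus "\<exists>k. i = eidx n p a k \<and> j = eidx n p a (Suc k)"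
        using eidx_inv[of i] unfolding nxt_def by (intro exI[of _ "kidx n p i"]) auto
    qed
    thus ?thesis by (simp add: Lambda_def)
  qed
  have "Upsilon n p i j = (\<Sum>a\<in>{1..p}. if a = aidx n p i \<and> j = nxt i then 1 else 0)"
    unfolding Upsilon_def by (rule sum.cong) (auto simp: L)
  also have "\<dots> = (if j = nxt i then 1 else 0)"
    using aidx_rng[of i] by (auto simp: sum.delta)
  finally show ?thesis .
qed

end


definition tr :: "imat \<Rightarrow> imat" where "tr A = (\<lambda>i j. A j i)"

lemma infsum_supp:
  fixes f :: "nat \<Rightarrow> real"
  assumes "finite F" "\<And>k. k \<notin> F \<Longrightarrow> f k = 0"
  shows "infsum f UNIV = sum f F"
proof -
  have "infsum f UNIV = infsum f F" by (rule infsum_cong_neutral) (use assms in auto)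
  thus ?thesis using assms by simp
qed

lemma mm_fin:
  assumes "finite F" "\<And>k. k \<notin> F \<Longrightarrow> A i k * B k j = 0"
  shows "mat_mult A B i j = (\<Sum>k\<in>F. A i k * B k j)"
  unfolding mat_mult_def by (rule infsum_supp) (use assms in auto)

lemma mm_assoc_rows:
  assumes fK: "finite K" and fM: "finite M"
    and A0: "\<And>k. k \<notin> K \<Longrightarrow> A i k = 0"
    and B0: "\<And>k m. k \<in> K \<Longrightarrow> m \<notin> M \<Longrightarrow> B k m = 0"
  shows "mat_mult (mat_mult A B) C i j = mat_mult A (mat_mult B C) i j"
proof -
  have AB: "mat_mult A B i m = (\<Sum>k\<in>K. A i k * B k m)" for m
    by (rule mm_fin) (use fK A0 in auto)
  have AB0: "mat_mult A B i m = 0" if "m \<notin> M" for m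
    unfolding AB using B0 that by simp
  have BC: "mat_mult B C k j = (\<Sum>m\<in>M. B k m * C m j)" if "k \<in> K" for k
    by (rule mm_fin) (use fM B0 that in auto)
  have "mat_mult (mat_mult A B) C i j = (\<Sum>m\<in>M. mat_mult A B i m * C m j)"
    by (rule mm_fin) (use fM AB0 in auto)
  also have "\<dots> = (\<Sum>m\<in>M. \<Sum>k\<in>K. A i k * B k m * C m j)"
    unfolding AB by (simp add: sum_distrib_right)
  also have "\<dots> = (\<Sum>k\<in>K. \<Sum>m\<in>M. A i k * B k m * C m j)" by (rule sum.swap)
  also have "\<dots> = (\<Sum>k\<in>K. A i k * mat_mult B C k j)"
    by (rule sum.cong) (simp_all add: BC sum_distrib_left mult.assoc)
  also have "\<dots> = mat_mult A (mat_mult B C) i j"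
    by (rule mm_fin[symmetric]) (use fK A0 in auto)
  finally show ?thesis .
qed

lemma mm_assoc_cols:
  assumes fK: "finite K" and fM: "finite M"
    and C0: "\<And>m. m \<notin> M \<Longrightarrow> C m j = 0"
    and B0: "\<And>k m. m \<in> M \<Longrightarrow> k \<notin> K \<Longrightarrow> B k m = 0"
  shows "mat_mult (mat_mult A B) C i j = mat_mult A (mat_mult B C) i j"
proof -
  have BC: "mat_mult B C k j = (\<Sum>m\<in>M. B k m * C m j)" for k
    by (rule mm_fin) (use fM C0 in auto)
  have BC0: "mat_mult B C k j = 0" if "k \<notin> K" for k
    unfolding BC using B0 that by simp
  have AB: "mat_mult A B i m = (\<Sum>k\<in>K. A i k * B k m)" if "m \<in> M" for m
    by (rule mm_fin) (use fK B0 that in auto)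
  have "mat_mult (mat_mult A B) C i j = (\<Sum>m\<in>M. mat_mult A B i m * C m j)"
    by (rule mm_fin) (use fM C0 in auto)
  also have "\<dots> = (\<Sum>m\<in>M. \<Sum>k\<in>K. A i k * B k m * C m j)"
    by (rule sum.cong) (simp_all add: AB sum_distrib_right)
  also have "\<dots> = (\<Sum>k\<in>K. \<Sum>m\<in>M. A i k * B k m * C m j)" by (rule sum.swap)
  also have "\<dots> = (\<Sum>k\<in>K. A i k * mat_mult B C k j)"
    by (rule sum.cong) (simp_all add: BC sum_distrib_left mult.assoc)
  also have "\<dots> = mat_mult A (mat_mult B C) i j"
    by (rule mm_fin[symmetric]) (use fK BC0 in auto)
  finally show ?thesis .
qed

lemma mm_id_right: "mat_mult A mat_id = A"
proof (intro ext)
  fix i j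
  have "mat_mult A mat_id i j = (\<Sum>k\<in>{j}. A i k * mat_id k j)"
    by (rule mm_fin) (auto simp: mat_id_def)
  thus "mat_mult A mat_id i j = A i j" by (simp add: mat_id_def)
qed

lemma mm_id_left: "mat_mult mat_id A = A"
proof (intro ext)
  fix i j
  have "mat_mult mat_id A i j = (\<Sum>k\<in>{i}. mat_id i k * A k j)"
    by (rule mm_fin) (auto simp: mat_id_def)
  thus "mat_mult mat_id A i j = A i j" by (simp add: mat_id_def)
qed

lemma mm_tr: "mat_mult (tr A) (tr B) = tr (mat_mult B A)"
  unfolding tr_def mat_mult_def by (intro ext) (simp add: mult.commute)

lemma tr_tr[simp]: "tr (tr A) = A" by (simp add: tr_def)
lemma tr_id[simp]: "tr mat_id = mat_id" by (auto simp: tr_def mat_id_def intro!: ext)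
lemma tr_lower: "lower_tri (tr A) = upper_tri A"
  by (auto simp: tr_def lower_tri_def upper_tri_def)

function linv :: "imat \<Rightarrow> nat \<Rightarrow> nat \<Rightarrow> real" where
  "linv M i j = (if i < j then 0 else if i = j then 1 / M i i
      else - (\<Sum>k\<in>{j..<i}. M i k * linv M k j) / M i i)"
  by pat_completeness auto
termination by (relation "Wellfounded.measure (\<lambda>(M, i, j). i)") auto

declare linv.simps[simp del]

lemma linv_right:
  assumes L: "lower_tri M" and D: "\<And>i. M i i \<noteq> 0"
  shows "lower_tri (linv M) \<and> (\<forall>i. linv M i i \<noteq> 0) \<and> mat_mult M (linv M) = mat_id"
proof (intro conjI allI ext)
  show "lower_tri (linv M)" unfolding lower_tri_def by (subst linv.simps) simp
  fix i show "linv M i i \<noteq> 0" using D[of i] by (subst linv.simps) simp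
next
  fix i j
  let ?N = "linv M"
  have Mi: "M i k = 0" if "i < k" for k using L that by (simp add: lower_tri_def)
  have Nj: "?N k j = 0" if "k < j" for k using that by (subst linv.simps) simp
  have e: "mat_mult M ?N i j = (\<Sum>k\<in>{j..i}. M i k * ?N k j)"
    by (rule mm_fin) (auto simp: Mi Nj not_le)
  show "mat_mult M ?N i j = mat_id i j"
  proof (cases "i < j")
    case True thus ?thesis unfolding e by (simp add: mat_id_def)
  next
    case False
    show ?thesis
    proof (cases "i = j")
      case True thus ?thesis unfolding e using D[of i]
        by (subst linv.simps) (simp add: mat_id_def)
    next
      case False
      with \<open>\<not> i < j\<close> have ji: "j < i" by simp
      have "{j..i} = insert i {j..<i}" using ji by auto
      hence "mat_mult M ?N i j = M i i * ?N i j + (\<Sum>k\<in>{j..<i}. M i k * ?N k j)"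
        unfolding e by simp
      also have "M i i * ?N i j = - (\<Sum>k\<in>{j..<i}. M i k * ?N k j)"
        using ji D[of i] by (subst linv.simps) simp
      finally show ?thesis using ji by (simp add: mat_id_def)
    qed
  qed
qed

lemma lower_assoc:
  assumes "lower_tri A" "lower_tri B"
  shows "mat_mult (mat_mult A B) C = mat_mult A (mat_mult B C)"
proof (intro ext)
  fix i j
  show "mat_mult (mat_mult A B) C i j = mat_mult A (mat_mult B C) i j"
    by (rule mm_assoc_rows[of "{..i}" "{..i}"]) (use assms in \<open>auto simp: lower_tri_def\<close>)
qed

lemma upper_assoc:
  assumes "upper_tri B" "upper_tri C"
  shows "mat_mult (mat_mult A B) C = mat_mult A (mat_mult B C)"
proof (intro ext)
  fix i j
  show "mat_mult (mat_mult A B) C i j = mat_mult A (mat_mult B C) i j"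
    by (rule mm_assoc_cols[of "{..j}" "{..j}"]) (use assms in \<open>auto simp: upper_tri_def\<close>)
qed

lemma lt_inv_props:
  assumes L: "lower_tri M" and D: "\<And>i. M i i \<noteq> 0"
  shows "lower_tri (lt_inv M) \<and> mat_mult M (lt_inv M) = mat_id \<and> mat_mult (lt_inv M) M = mat_id"
proof -
  define N where "N = linv M"
  have N: "lower_tri N" "\<And>i. N i i \<noteq> 0" "mat_mult M N = mat_id"
    using linv_right[OF L D] unfolding N_def by auto
  define N' where "N' = linv N"
  have N': "lower_tri N'" "mat_mult N N' = mat_id"
    using linv_right[OF N(1,2)] unfolding N'_def by auto
  have "M = mat_mult M (mat_mult N N')" by (simp add: N' mm_id_right)
  also have "\<dots> = mat_mult (mat_mult M N) N'" using lower_assoc[OF L N(1)] by simp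
  also have "\<dots> = N'" by (simp add: N mm_id_left)
  finally have NM: "mat_mult N M = mat_id" using N' by simp
  have P: "lower_tri N \<and> mat_mult M N = mat_id \<and> mat_mult N M = mat_id" using N NM by simp
  have "lt_inv M = N" unfolding lt_inv_def
  proof (rule the_equality)
    show "lower_tri N \<and> mat_mult M N = mat_id \<and> mat_mult N M = mat_id" by fact
  next
    fix X assume X: "lower_tri X \<and> mat_mult M X = mat_id \<and> mat_mult X M = mat_id"
    have "X = mat_mult X (mat_mult M N)" by (simp add: N mm_id_right)
    also have "\<dots> = mat_mult (mat_mult X M) N" using lower_assoc[of X M] X L by simp
    also have "\<dots> = N" using X by (simp add: mm_id_left)
    finally show "X = N" .
  qed
  thus ?thesis using P by simp
qed

lemma ut_inv_props:
  assumes U: "upper_tri M" and D: "\<And>i. M i i \<noteq> 0"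
  shows "upper_tri (ut_inv M) \<and> mat_mult M (ut_inv M) = mat_id \<and> mat_mult (ut_inv M) M = mat_id"
proof -
  have L: "lower_tri (tr M)" using U tr_lower by simp
  have D': "\<And>i. tr M i i \<noteq> 0" using D by (simp add: tr_def)
  define N where "N = tr (lt_inv (tr M))"
  note P0 = lt_inv_props[OF L D']
  have N1: "upper_tri N" using P0 tr_lower[of "lt_inv (tr M)"] unfolding N_def
    by (metis tr_lower tr_tr)
  have N2: "mat_mult M N = mat_id"
  proof -
    have "mat_mult M N = tr (mat_mult (lt_inv (tr M)) (tr M))"
      unfolding N_def using mm_tr[of M "lt_inv (tr M)"] by (metis mm_tr tr_tr)
    thus ?thesis using P0 by simp
  qed
  have N3: "mat_mult N M = mat_id"
  proof -
    have "mat_mult N M = tr (mat_mult (tr M) (lt_inv (tr M)))"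
      unfolding N_def by (metis mm_tr tr_tr)
    thus ?thesis using P0 by simp
  qed
  have "ut_inv M = N" unfolding ut_inv_def
  proof (rule the_equality)
    show "upper_tri N \<and> mat_mult M N = mat_id \<and> mat_mult N M = mat_id" using N1 N2 N3 by simp
  next
    fix X assume X: "upper_tri X \<and> mat_mult M X = mat_id \<and> mat_mult X M = mat_id"
    have "X = mat_mult (mat_mult N M) X" by (simp add: N3 mm_id_left)
    also have "\<dots> = mat_mult N (mat_mult M X)" using upper_assoc[of M X] X U by simp
    also have "\<dots> = N" using X by (simp add: mm_id_right)
    finally show "X = N" .
  qed
  thus ?thesis using N1 N2 N3 by simp
qed



lemma band_sum1:
  fixes h :: "nat \<Rightarrow> real" and l A B :: nat
  assumes H: "\<And>m. h m \<noteq> 0 \<Longrightarrow> int m - int l \<in> {- int B..int A}"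
  shows "(\<Sum>k\<in>{- int B..int A}. if 0 \<le> int l + k then h (nat (int l + k)) else 0) = infsum h UNIV"
proof -
  let ?I = "{- int B..int A}"
  let ?I' = "{k \<in> ?I. 0 \<le> int l + k}"
  let ?f = "\<lambda>k. nat (int l + k)"
  have "(\<Sum>k\<in>?I. if 0 \<le> int l + k then h (nat (int l + k)) else 0) = (\<Sum>k\<in>?I'. h (?f k))"
    by (rule sum.inter_filter[symmetric]) simp
  also have "\<dots> = (\<Sum>m\<in>?f ` ?I'. h m)"
  proof -
    have inj: "inj_on ?f ?I'"
    proof (rule inj_onI)
      fix x y assume "x \<in> ?I'" "y \<in> ?I'" "?f x = ?f y"
      thus "x = y" by (simp add: eq_nat_nat_iff)
    qed
    show ?thesis by (simp only: sum.reindex[OF inj] comp_def)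
  qed
  also have "\<dots> = infsum h UNIV"
  proof (rule infsum_supp[symmetric])
    show "finite (?f ` ?I')" by (rule finite_imageI, rule finite_subset[of _ ?I]) auto
    fix m assume m: "m \<notin> ?f ` ?I'"
    show "h m = 0"
    proof (rule ccontr)
      assume "h m \<noteq> 0"
      hence "int m - int l \<in> ?I'" using H by auto
      moreover have "m = ?f (int m - int l)" by simp
      ultimately show False using m by blast
    qed
  qed
  finally show ?thesis .
qed

lemma band_sum2:
  fixes h :: "nat \<Rightarrow> real" and l A B :: nat
  assumes H: "\<And>m. h m \<noteq> 0 \<Longrightarrow> int l - int m \<in> {- int B..int A}"
  shows "(\<Sum>k\<in>{- int B..int A}. if 0 \<le> int l - k then h (nat (int l - k)) else 0) = infsum h UNIV"
proof -
  let ?I = "{- int B..int A}"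
  let ?I' = "{k \<in> ?I. 0 \<le> int l - k}"
  let ?f = "\<lambda>k. nat (int l - k)"
  have "(\<Sum>k\<in>?I. if 0 \<le> int l - k then h (nat (int l - k)) else 0) = (\<Sum>k\<in>?I'. h (?f k))"
    by (rule sum.inter_filter[symmetric]) simp
  also have "\<dots> = (\<Sum>m\<in>?f ` ?I'. h m)"
  proof -
    have inj: "inj_on ?f ?I'"
    proof (rule inj_onI)
      fix x y assume "x \<in> ?I'" "y \<in> ?I'" "?f x = ?f y"
      thus "x = y" by (simp add: eq_nat_nat_iff)
    qed
    show ?thesis by (simp only: sum.reindex[OF inj] comp_def)
  qed
  also have "\<dots> = infsum h UNIV"
  proof (rule infsum_supp[symmetric])
    show "finite (?f ` ?I')" by (rule finite_imageI, rule finite_subset[of _ ?I]) auto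
    fix m assume m: "m \<notin> ?f ` ?I'"
    show "h m = 0"
    proof (rule ccontr)
      assume "h m \<noteq> 0"
      hence "int l - int m \<in> ?I'" using H by auto
      moreover have "m = ?f (int l - int m)" by simp
      ultimately show False using m by blast
    qed
  qed
  finally show ?thesis .
qed

lemma poly_nth:
  assumes "finite K"
  shows "fls_nth (\<Sum>k\<in>K. fls_const (c k) * zvar ^ k) t = (if t \<le> 0 \<and> nat (-t) \<in> K then c (nat (-t)) else 0)"
proof -
  have "fls_nth (\<Sum>k\<in>K. fls_const (c k) * zvar ^ k) t = (\<Sum>k\<in>K. if k = nat (-t) then (if t \<le> 0 then c k else 0) else 0)"
    unfolding zvar_def fls_nth_sum by (rule sum.cong) auto
  also have "\<dots> = (if t \<le> 0 \<and> nat (-t) \<in> K then c (nat (-t)) else 0)"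
    using assms by (simp add: sum.delta)
  finally show ?thesis .
qed

lemma zvar_nth: "fls_nth (zvar * f) t = fls_nth f (t + 1)"
  unfolding zvar_def fls_X_inv_times_conv_shift(1) by simp

lemma zinv_series_nth: "fls_nth (zinv * zinv_series f) t = (if 1 \<le> t then f (nat (t - 1)) else 0)"
  unfolding zinv_def zinv_series_def fls_X_times_conv_shift(1) by simp



lemma nxt_aidx: assumes "comp_ok n p"
  shows "aidx n p (nxt n p m) = aidx n p m" "kidx n p (nxt n p m) = Suc (kidx n p m)"
  unfolding nxt_def[OF assms] using eidx_idx[OF assms aidx_rng[OF assms]] by simp_all

lemma mm_U_left: assumes "comp_ok n p"
  shows "mat_mult (Upsilon n p) B m j = B (nxt n p m) j"
proof -
  have "mat_mult (Upsilon n p) B m j = (\<Sum>k\<in>{nxt n p m}. Upsilon n p m k * B k j)"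
    by (rule mm_fin) (auto simp: Upsilon_eq[OF assms])
  thus ?thesis by (simp add: Upsilon_eq[OF assms])
qed

lemma mm_Ut_right: assumes "comp_ok n p"
  shows "mat_mult A (tr (Upsilon n p)) l j = A l (nxt n p j)"
proof -
  have "mat_mult A (tr (Upsilon n p)) l j = (\<Sum>k\<in>{nxt n p j}. A l k * tr (Upsilon n p) k j)"
    by (rule mm_fin) (auto simp: Upsilon_eq[OF assms] tr_def)
  thus ?thesis by (simp add: Upsilon_eq[OF assms] tr_def)
qed

context
  fixes \<mu> :: "real measure" and w1 w2 :: "nat \<Rightarrow> real \<Rightarrow> real"
    and n1 n2 :: "nat \<Rightarrow> nat" and p1 p2 :: nat and S Sb :: imat
  assumes comp1: "comp_ok n1 p1" and comp2: "comp_ok n2 p2"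
    and S_lower: "lower_tri S" and S_unit: "\<And>i. S i i = 1"
    and Sb_upper: "upper_tri Sb" and Sb_diag: "\<And>i. Sb i i \<noteq> 0"
    and factor: "moment_mat \<mu> w1 w2 n1 p1 n2 p2 = mat_mult (lt_inv S) Sb"
begin

abbreviation "qN \<equiv> lt_inv S"
abbreviation "qNb \<equiv> ut_inv Sb"
abbreviation "qU1 \<equiv> Upsilon n1 p1"
abbreviation "qU2 \<equiv> Upsilon n2 p2"
abbreviation "qJ \<equiv> Jmat S n1 p1"
abbreviation "qnx1 \<equiv> nxt n1 p1"
abbreviation "qnx2 \<equiv> nxt n2 p2"
abbreviation "qB1 \<equiv> Nbd n1 p1"
abbreviation "qB2 \<equiv> Nbd n2 p2"

lemma Sd: "S i i \<noteq> 0" using S_unit by simp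
lemma NP: "lower_tri qN" "mat_mult S qN = mat_id" "mat_mult qN S = mat_id"
  using lt_inv_props[OF S_lower Sd] by auto
lemma NbP: "upper_tri qNb" "mat_mult Sb qNb = mat_id" "mat_mult qNb Sb = mat_id"
  using ut_inv_props[OF Sb_upper Sb_diag] by auto

lemma S0: "l < m \<Longrightarrow> S l m = 0" using S_lower by (simp add: lower_tri_def)
lemma N0: "l < m \<Longrightarrow> qN l m = 0" using NP(1) by (simp add: lower_tri_def)
lemma Sb0: "m < l \<Longrightarrow> Sb l m = 0" using Sb_upper by (simp add: upper_tri_def)
lemma Nb0: "m < l \<Longrightarrow> qNb l m = 0" using NbP(1) by (simp add: upper_tri_def)

lemma SU1_0: assumes "l + qB1 < c" shows "mat_mult S qU1 l c = 0"
  unfolding mat_mult_def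
proof (rule infsum_0)
  fix m
  show "S l m * qU1 m c = 0"
  proof (cases "m \<le> l")
    case True
    hence "qnx1 m \<le> l + qB1" using nxt_bound[OF comp1, of m] by simp
    hence "c \<noteq> qnx1 m" using assms by simp
    thus ?thesis by (simp add: Upsilon_eq[OF comp1])
  qed (simp add: S0)
qed

lemma U1_0: "k \<le> l \<Longrightarrow> l + qB1 < m \<Longrightarrow> qU1 k m = 0"
  using nxt_bound[OF comp1, of k] by (auto simp: Upsilon_eq[OF comp1])

lemma SbU2_0: "m \<le> l \<Longrightarrow> l + qB2 < k \<Longrightarrow> Sb k (qnx2 m) = 0"
  using nxt_bound[OF comp2, of m] by (auto simp: Sb0)

lemma J_def': "qJ = mat_mult (mat_mult S qU1) qN" by (simp add: Jmat_def)

lemma J_upper_band: assumes "l + qB1 < m" shows "qJ l m = 0"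
  unfolding J_def' mat_mult_def[of _ qN]
proof (rule infsum_0)
  fix k show "mat_mult S qU1 l k * qN k m = 0"
    using SU1_0[of l k] N0[of k m] assms by (cases "l + qB1 < k") auto
qed

lemma JS: "mat_mult qJ S = mat_mult S qU1"
proof (intro ext)
  fix l j
  have "mat_mult qJ S l j = mat_mult (mat_mult S qU1) (mat_mult qN S) l j"
    unfolding J_def'
    by (rule mm_assoc_rows[of "{..l+qB1}" "{..l+qB1}"]) (auto simp: SU1_0 N0)
  thus "mat_mult qJ S l j = mat_mult S qU1 l j" by (simp add: NP mm_id_right)
qed

lemma g_eq: "moment_mat \<mu> w1 w2 n1 p1 n2 p2 (qnx1 m) j = moment_mat \<mu> w1 w2 n1 p1 n2 p2 m (qnx2 j)"
  unfolding moment_mat_def by (simp add: nxt_aidx[OF comp1] nxt_aidx[OF comp2])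

lemma Sg: "mat_mult S (moment_mat \<mu> w1 w2 n1 p1 n2 p2) = Sb"
  unfolding factor using lower_assoc[OF S_lower NP(1), of Sb] by (simp add: NP mm_id_left)

lemma JSb: "mat_mult qJ Sb = mat_mult Sb (tr qU2)"
proof (intro ext)
  fix l j
  let ?g = "moment_mat \<mu> w1 w2 n1 p1 n2 p2"
  have "mat_mult qJ Sb l j = mat_mult (mat_mult S qU1) ?g l j"
    unfolding J_def' factor
    by (rule mm_assoc_rows[of "{..l+qB1}" "{..l+qB1}"]) (auto simp: SU1_0 N0)
  also have "\<dots> = mat_mult S (mat_mult qU1 ?g) l j"
    by (rule mm_assoc_rows[of "{..l}" "{..l+qB1}"]) (auto simp: S0 U1_0)
  also have "\<dots> = mat_mult S ?g l (qnx2 j)"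
    unfolding mat_mult_def[of S] mm_U_left[OF comp1] g_eq ..
  also have "\<dots> = mat_mult Sb (tr qU2) l j" by (simp add: Sg mm_Ut_right[OF comp2])
  finally show "mat_mult qJ Sb l j = mat_mult Sb (tr qU2) l j" .
qed

lemma J_alt: "qJ = mat_mult (mat_mult Sb (tr qU2)) qNb"
proof -
  have "qJ = mat_mult qJ (mat_mult Sb qNb)" by (simp add: NbP mm_id_right)
  also have "\<dots> = mat_mult (mat_mult qJ Sb) qNb" using upper_assoc[OF Sb_upper NbP(1)] by simp
  finally show ?thesis by (simp add: JSb)
qed

lemma J_lower_band: assumes "m + qB2 < l" shows "qJ l m = 0"
proof -
  have "qJ l m = infsum (\<lambda>k. mat_mult Sb (tr qU2) l k * qNb k m) UNIV"
    by (subst J_alt) (simp add: mat_mult_def)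
  also have "\<dots> = 0"
  proof (rule infsum_0)
    fix k show "mat_mult Sb (tr qU2) l k * qNb k m = 0"
    proof (cases "k \<le> m")
      case True
      hence "qnx2 k < l" using nxt_bound[OF comp2, of k] assms by simp
      thus ?thesis by (simp add: mm_Ut_right[OF comp2] Sb0)
    qed (simp add: Nb0)
  qed
  finally show ?thesis .
qed

lemma J_band: "qJ l m \<noteq> 0 \<Longrightarrow> l \<le> m + qB2 \<and> m \<le> l + qB1"
  using J_lower_band J_upper_band by (meson not_le)

lemma NJ: "mat_mult qN qJ = mat_mult qU1 qN"
proof (intro ext)
  fix c l
  have "mat_mult qN qJ c l = mat_mult (mat_mult qN (mat_mult S qU1)) qN c l"
    unfolding J_def'
    by (rule mm_assoc_rows[of "{..c}" "{..c+qB1}", symmetric]) (auto simp: SU1_0 N0)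
  also have "mat_mult qN (mat_mult S qU1) = qU1"
    using lower_assoc[OF NP(1) S_lower, of qU1] by (simp add: NP mm_id_left)
  finally show "mat_mult qN qJ c l = mat_mult qU1 qN c l" .
qed

lemma NbJ: "mat_mult qNb qJ = mat_mult (tr qU2) qNb"
proof (intro ext)
  fix c l
  have "mat_mult qNb qJ c l = mat_mult (mat_mult qNb (mat_mult Sb (tr qU2))) qNb c l"
    unfolding J_alt
    by (rule mm_assoc_cols[of "{..l+qB2}" "{..l}", symmetric])
       (auto simp: Nb0 mm_Ut_right[OF comp2] SbU2_0)
  also have "mat_mult qNb (mat_mult Sb (tr qU2)) = tr qU2"
  proof (intro ext)
    fix i j
    have "mat_mult qNb (mat_mult Sb (tr qU2)) i j = mat_mult (mat_mult qNb Sb) (tr qU2) i j"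
      by (rule mm_assoc_cols[of "{..qnx2 j}" "{qnx2 j}", symmetric])
         (auto simp: Sb0 tr_def Upsilon_eq[OF comp2])
    thus "mat_mult qNb (mat_mult Sb (tr qU2)) i j = tr qU2 i j" by (simp add: NbP mm_id_left)
  qed
  finally show "mat_mult qNb qJ c l = mat_mult (tr qU2) qNb c l" .
qed

lemma R1: assumes a: "a \<in> {1..p1}"
  shows "mat_mult qJ S l (eidx n1 p1 a j) = (if 0 < j then S l (eidx n1 p1 a (j - 1)) else 0)"
proof -
  have e: "qU1 m (eidx n1 p1 a j) = (if 0 < j \<and> m = eidx n1 p1 a (j - 1) then 1 else 0)" for m
    by (simp add: Upsilon_eq[OF comp1] nxt_eq_eidx[OF comp1 a] eq_commute[of "eidx n1 p1 a j"])
  show ?thesis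
  proof (cases "0 < j")
    case True
    have "mat_mult S qU1 l (eidx n1 p1 a j) = (\<Sum>m\<in>{eidx n1 p1 a (j - 1)}. S l m * qU1 m (eidx n1 p1 a j))"
      by (rule mm_fin) (auto simp: e)
    thus ?thesis using True by (simp add: JS e)
  next
    case False
    hence j0: "j = 0" by simp
    have e0: "qU1 m (eidx n1 p1 a 0) = 0" for m using e[of m] unfolding j0 by simp
    have "mat_mult S qU1 l (eidx n1 p1 a 0) = (\<Sum>m\<in>{}. S l m * qU1 m (eidx n1 p1 a 0))"
      by (rule mm_fin) (simp_all add: e0)
    thus ?thesis unfolding j0 by (simp add: JS)
  qed
qed

lemma R2: assumes b: "b \<in> {1..p2}"
  shows "mat_mult qJ Sb l (eidx n2 p2 b j) = Sb l (eidx n2 p2 b (Suc j))"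
  by (simp add: JSb mm_Ut_right[OF comp2] nxt_eidx[OF comp2 b])

lemma R3: assumes b: "b \<in> {1..p2}"
  shows "mat_mult qNb qJ (eidx n2 p2 b j) l = (if 0 < j then qNb (eidx n2 p2 b (j - 1)) l else 0)"
proof -
  have e: "tr qU2 (eidx n2 p2 b j) m = (if 0 < j \<and> m = eidx n2 p2 b (j - 1) then 1 else 0)" for m
    by (simp add: tr_def Upsilon_eq[OF comp2] nxt_eq_eidx[OF comp2 b] eq_commute[of "eidx n2 p2 b j"])
  show ?thesis
  proof (cases "0 < j")
    case True
    have "mat_mult (tr qU2) qNb (eidx n2 p2 b j) l = (\<Sum>m\<in>{eidx n2 p2 b (j - 1)}. tr qU2 (eidx n2 p2 b j) m * qNb m l)"
      by (rule mm_fin) (auto simp: e)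
    thus ?thesis using True by (simp add: NbJ e)
  next
    case False
    hence j0: "j = 0" by simp
    have e0: "tr qU2 (eidx n2 p2 b 0) m = 0" for m using e[of m] unfolding j0 by simp
    have "mat_mult (tr qU2) qNb (eidx n2 p2 b 0) l = (\<Sum>m\<in>{}. tr qU2 (eidx n2 p2 b 0) m * qNb m l)"
      by (rule mm_fin) (simp_all add: e0)
    thus ?thesis unfolding j0 by (simp add: NbJ)
  qed
qed

lemma R4: assumes a: "a \<in> {1..p1}"
  shows "mat_mult qN qJ (eidx n1 p1 a j) l = qN (eidx n1 p1 a (Suc j)) l"
  by (simp add: NJ mm_U_left[OF comp1] nxt_eidx[OF comp1 a])

lemma A_nth: assumes a: "a \<in> {1..p1}"
  shows "fls_nth (Apol S n1 p1 a (int l)) t = (if t \<le> 0 then S l (eidx n1 p1 a (nat (-t))) else 0)"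
proof -
  let ?K = "{k. eidx n1 p1 a k \<le> l}"
  have fin: "finite ?K"
    by (rule finite_subset[of _ "{..l}"]) (use eidx_ge[OF comp1 a] order_trans in auto)
  have "fls_nth (Apol S n1 p1 a (int l)) t
      = (if t \<le> 0 \<and> nat (-t) \<in> ?K then S l (eidx n1 p1 a (nat (-t))) else 0)"
    unfolding Apol_def using poly_nth[OF fin] by simp
  thus ?thesis by (auto simp: S0 not_le)
qed

lemma Ab_nth: assumes b: "b \<in> {1..p2}"
  shows "fls_nth (Abarpol Sb n2 p2 b (int l)) t = (if t \<le> 0 then qNb (eidx n2 p2 b (nat (-t))) l else 0)"
proof -
  let ?K = "{k. eidx n2 p2 b k \<le> l}"
  have fin: "finite ?K"
    by (rule finite_subset[of _ "{..l}"]) (use eidx_ge[OF comp2 b] order_trans in auto)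
  have "fls_nth (Abarpol Sb n2 p2 b (int l)) t
      = (if t \<le> 0 \<and> nat (-t) \<in> ?K then qNb (eidx n2 p2 b (nat (-t))) l else 0)"
    unfolding Abarpol_def using poly_nth[OF fin] by simp
  thus ?thesis by (auto simp: Nb0 not_le)
qed

lemma C_nth: "fls_nth (Cser Sb n2 p2 b (int l)) t = (if 1 \<le> t then Sb l (eidx n2 p2 b (nat (t - 1))) else 0)"
  unfolding Cser_def by (simp add: zinv_series_nth)

lemma Cb_nth: "fls_nth (Cbarser S n1 p1 a (int l)) t = (if 1 \<le> t then qN (eidx n1 p1 a (nat (t - 1))) l else 0)"
  unfolding Cbarser_def by (simp add: zinv_series_nth)

lemma rhs1:
  fixes F :: "int \<Rightarrow> real fls"
  assumes F0: "\<And>i. i < 0 \<Longrightarrow> F i = 0"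
  shows "fls_nth (\<Sum>k\<in>{- int qB2..int qB1}. fls_const (Jk qJ k (int l)) * F (int l + k)) t
       = infsum (\<lambda>m. qJ l m * fls_nth (F (int m)) t) UNIV"
proof -
  have "fls_nth (\<Sum>k\<in>{- int qB2..int qB1}. fls_const (Jk qJ k (int l)) * F (int l + k)) t
      = (\<Sum>k\<in>{- int qB2..int qB1}. if 0 \<le> int l + k then
           (\<lambda>m. qJ l m * fls_nth (F (int m)) t) (nat (int l + k)) else 0)"
    unfolding fls_nth_sum by (rule sum.cong) (auto simp: Jk_def F0)
  also have "\<dots> = infsum (\<lambda>m. qJ l m * fls_nth (F (int m)) t) UNIV"
  proof (rule band_sum1)
    fix m assume "qJ l m * fls_nth (F (int m)) t \<noteq> 0"
    hence "qJ l m \<noteq> 0" by auto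
    from J_band[OF this] show "int m - int l \<in> {- int qB2..int qB1}" by auto
  qed
  finally show ?thesis .
qed

lemma rhs2:
  fixes F :: "int \<Rightarrow> real fls"
  assumes F0: "\<And>i. i < 0 \<Longrightarrow> F i = 0"
  shows "fls_nth (\<Sum>k\<in>{- int qB2..int qB1}. fls_const (Jk qJ k (int l - k)) * F (int l - k)) t
       = infsum (\<lambda>m. qJ m l * fls_nth (F (int m)) t) UNIV"
proof -
  have "fls_nth (\<Sum>k\<in>{- int qB2..int qB1}. fls_const (Jk qJ k (int l - k)) * F (int l - k)) t
      = (\<Sum>k\<in>{- int qB2..int qB1}. if 0 \<le> int l - k then
           (\<lambda>m. qJ m l * fls_nth (F (int m)) t) (nat (int l - k)) else 0)"
    unfolding fls_nth_sum by (rule sum.cong) (auto simp: Jk_def F0)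
  also have "\<dots> = infsum (\<lambda>m. qJ m l * fls_nth (F (int m)) t) UNIV"
  proof (rule band_sum2)
    fix m assume "qJ m l * fls_nth (F (int m)) t \<noteq> 0"
    hence "qJ m l \<noteq> 0" by auto
    from J_band[OF this] show "int l - int m \<in> {- int qB2..int qB1}" by auto
  qed
  finally show ?thesis .
qed

lemma id1: assumes a: "a \<in> {1..p1}"
  shows "zvar * Apol S n1 p1 a (int l)
       = (\<Sum>k\<in>{- int qB2..int qB1}. fls_const (Jk qJ k (int l)) * Apol S n1 p1 a (int l + k))"
proof (rule fls_eqI)
  fix t
  have "fls_nth (\<Sum>k\<in>{- int qB2..int qB1}. fls_const (Jk qJ k (int l)) * Apol S n1 p1 a (int l + k)) t
      = infsum (\<lambda>m. qJ l m * fls_nth (Apol S n1 p1 a (int m)) t) UNIV"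
    by (rule rhs1) (simp add: Apol_def)
  also have "\<dots> = (if t \<le> 0 then mat_mult qJ S l (eidx n1 p1 a (nat (-t))) else 0)"
    by (cases "t \<le> 0") (simp_all add: A_nth[OF a] mat_mult_def)
  also have "\<dots> = fls_nth (zvar * Apol S n1 p1 a (int l)) t"
    unfolding zvar_nth A_nth[OF a] R1[OF a]
    by (auto simp: nat_diff_distrib)
  finally show "fls_nth (zvar * Apol S n1 p1 a (int l)) t
      = fls_nth (\<Sum>k\<in>{- int qB2..int qB1}. fls_const (Jk qJ k (int l)) * Apol S n1 p1 a (int l + k)) t"
    by simp
qed

lemma id2: assumes b: "b \<in> {1..p2}"
  shows "zvar * Cser Sb n2 p2 b (int l) - fls_const (cvec Sb n2 p2 b l)
       = (\<Sum>k\<in>{- int qB2..int qB1}. fls_const (Jk qJ k (int l)) * Cser Sb n2 p2 b (int l + k))"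
proof (rule fls_eqI)
  fix t
  have "fls_nth (\<Sum>k\<in>{- int qB2..int qB1}. fls_const (Jk qJ k (int l)) * Cser Sb n2 p2 b (int l + k)) t
      = infsum (\<lambda>m. qJ l m * fls_nth (Cser Sb n2 p2 b (int m)) t) UNIV"
    by (rule rhs1) (simp add: Cser_def)
  also have "\<dots> = (if 1 \<le> t then mat_mult qJ Sb l (eidx n2 p2 b (nat (t - 1))) else 0)"
    by (cases "1 \<le> t") (simp_all add: C_nth mat_mult_def)
  also have "\<dots> = fls_nth (zvar * Cser Sb n2 p2 b (int l) - fls_const (cvec Sb n2 p2 b l)) t"
    unfolding fls_minus_nth zvar_nth C_nth R2[OF b] fls_const_nth cvec_def
    by (auto simp: Suc_nat_eq_nat_zadd1)
  finally show "fls_nth (zvar * Cser Sb n2 p2 b (int l) - fls_const (cvec Sb n2 p2 b l)) t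
      = fls_nth (\<Sum>k\<in>{- int qB2..int qB1}. fls_const (Jk qJ k (int l)) * Cser Sb n2 p2 b (int l + k)) t"
    by simp
qed

lemma id3: assumes b: "b \<in> {1..p2}"
  shows "zvar * Abarpol Sb n2 p2 b (int l)
       = (\<Sum>k\<in>{- int qB2..int qB1}. fls_const (Jk qJ k (int l - k)) * Abarpol Sb n2 p2 b (int l - k))"
proof (rule fls_eqI)
  fix t
  have "fls_nth (\<Sum>k\<in>{- int qB2..int qB1}. fls_const (Jk qJ k (int l - k)) * Abarpol Sb n2 p2 b (int l - k)) t
      = infsum (\<lambda>m. qJ m l * fls_nth (Abarpol Sb n2 p2 b (int m)) t) UNIV"
    by (rule rhs2) (simp add: Abarpol_def)
  also have "\<dots> = (if t \<le> 0 then mat_mult qNb qJ (eidx n2 p2 b (nat (-t))) l else 0)"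
    by (cases "t \<le> 0") (simp_all add: Ab_nth[OF b] mat_mult_def mult.commute)
  also have "\<dots> = fls_nth (zvar * Abarpol Sb n2 p2 b (int l)) t"
    unfolding zvar_nth Ab_nth[OF b] R3[OF b]
    by (auto simp: nat_diff_distrib)
  finally show "fls_nth (zvar * Abarpol Sb n2 p2 b (int l)) t
      = fls_nth (\<Sum>k\<in>{- int qB2..int qB1}. fls_const (Jk qJ k (int l - k)) * Abarpol Sb n2 p2 b (int l - k)) t"
    by simp
qed

lemma id4: assumes a: "a \<in> {1..p1}"
  shows "zvar * Cbarser S n1 p1 a (int l) - fls_const (cbarvec S n1 p1 a l)
       = (\<Sum>k\<in>{- int qB2..int qB1}. fls_const (Jk qJ k (int l - k)) * Cbarser S n1 p1 a (int l - k))"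
proof (rule fls_eqI)
  fix t
  have "fls_nth (\<Sum>k\<in>{- int qB2..int qB1}. fls_const (Jk qJ k (int l - k)) * Cbarser S n1 p1 a (int l - k)) t
      = infsum (\<lambda>m. qJ m l * fls_nth (Cbarser S n1 p1 a (int m)) t) UNIV"
    by (rule rhs2) (simp add: Cbarser_def)
  also have "\<dots> = (if 1 \<le> t then mat_mult qN qJ (eidx n1 p1 a (nat (t - 1))) l else 0)"
    by (cases "1 \<le> t") (simp_all add: Cb_nth mat_mult_def mult.commute)
  also have "\<dots> = fls_nth (zvar * Cbarser S n1 p1 a (int l) - fls_const (cbarvec S n1 p1 a l)) t"
    unfolding fls_minus_nth zvar_nth Cb_nth R4[OF a] fls_const_nth cbarvec_def
    by (auto simp: Suc_nat_eq_nat_zadd1)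
  finally show "fls_nth (zvar * Cbarser S n1 p1 a (int l) - fls_const (cbarvec S n1 p1 a l)) t
      = fls_nth (\<Sum>k\<in>{- int qB2..int qB1}. fls_const (Jk qJ k (int l - k)) * Cbarser S n1 p1 a (int l - k)) t"
    by simp
qed

end

theorem theorem2p2:
  fixes \<mu> :: "real measure" and \<Delta> :: "real set"
    and w1 w2 :: "nat \<Rightarrow> real \<Rightarrow> real"
    and n1 n2 :: "nat \<Rightarrow> nat" and p1 p2 :: nat
    and S Sb :: imat
  assumes interval: "is_interval \<Delta>"
    and borel: "sets \<mu> = sets borel"
    and finite: "finite_measure \<mu>"
    and supp: "emeasure \<mu> (UNIV - \<Delta>) = 0"
    and comp1: "comp_ok n1 p1" and comp2: "comp_ok n2 p2"
    and moments: "\<And>i j. integrable \<mu> (\<lambda>x. x ^ (kidx n1 p1 i + kidx n2 p2 j)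
                      * w1 (aidx n1 p1 i) x * w2 (aidx n2 p2 j) x)"
    and S_lower: "lower_tri S" and S_unit: "\<And>i. S i i = 1"
    and Sb_upper: "upper_tri Sb" and Sb_diag: "\<And>i. Sb i i \<noteq> 0"
    and factor: "moment_mat \<mu> w1 w2 n1 p1 n2 p2 = mat_mult (lt_inv S) Sb"
    and a_rng: "a \<in> {1..p1}" and b_rng: "b \<in> {1..p2}"
  defines "J \<equiv> Jmat S n1 p1"
    and "N1 \<equiv> int (Nbd n1 p1)" and "N2 \<equiv> int (Nbd n2 p2)"
  shows
    "(zvar * Apol S n1 p1 a (int l)
       = (\<Sum>k\<in>{-N2..N1}. fls_const (Jk J k (int l)) * Apol S n1 p1 a (int l + k))) \<and>
    (zvar * Cser Sb n2 p2 b (int l) - fls_const (cvec Sb n2 p2 b l)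
       = (\<Sum>k\<in>{-N2..N1}. fls_const (Jk J k (int l)) * Cser Sb n2 p2 b (int l + k))) \<and>
    (zvar * Abarpol Sb n2 p2 b (int l)
       = (\<Sum>k\<in>{-N2..N1}. fls_const (Jk J k (int l - k)) * Abarpol Sb n2 p2 b (int l - k))) \<and>
    (zvar * Cbarser S n1 p1 a (int l) - fls_const (cbarvec S n1 p1 a l)
       = (\<Sum>k\<in>{-N2..N1}. fls_const (Jk J k (int l - k)) * Cbarser S n1 p1 a (int l - k)))"
  proof -
  note ctx = comp1 comp2 S_lower S_unit Sb_upper Sb_diag factor
  show ?thesis
    unfolding J_def N1_def N2_def
    using id1[OF ctx a_rng, of l] id2[OF ctx b_rng, of l] id3[OF ctx b_rng, of l] id4[OF ctx a_rng, of l]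
    by simp
qed

end
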